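(* Let $\mathcal N=\{N_1,\ldots,N_\ell\}$ ($\ell\ge4$) be a family of $k$-sets satisfying properties (i) and (ii) below, $m=|V|-k$, and fix any run of the decomposition process described in the context. Then the number of indices $x\in\{1,\dots,\ell\}$ with $0<|\Gamma_x|<m^{1/3}$ (light $k$-sets) is at most $3m$.
   Context: Setting: $k\ge3$, $\mathcal N=\{N_1,\dots,N_\ell\}$ a family of $k$-subsets, $V=\bigcup N_i$, $n=|V|$, $m=n-k$, satisfying (i) $\bigcap_{i}N_i=\varnothing$ but $\bigcap_{j\ne i}N_j\ne\varnothing$ for all $i$; (ii) every $S\subseteq V$ with $|S|\ge k+1$ contains a $3$-set $T$ not contained in any $N_i$. Assume $\ell\ge4$. Decomposition process: Stage $0$: $\ell_0=\ell$; for each $i\le\ell_0$ choose $a_i^{(0)}\in\bigcap_{r\ne i}N_r$; kernel $A^{(0)}=\{a_1^{(0)},\dots,a_{\ell_0}^{(0)}\}$. Having defined stages $0,\dots,j$ (with surviving sets $N_1,\dots,N_{\ell_j}$, $\ell_j\ge4$, and kernels $A^{(0)},\dots,A^{(j)}$), consider $R^{(j)}=\{N_r\setminus\bigcup_{s\le j}A^{(s)} : r\le\ell_j\}$, which has empty intersection. If every subfamily of $R^{(j)}$ minimal with respect to having empty intersection has only $2$ or $3$ members, stop and set $t=j$. Otherwise choose such a minimal subfamily with at least $4$ members; after reindexing assume it consists of the truncations $N_r\setminus\bigcup_{s\le j}A^{(s)}$, $r\le\ell_{j+1}$; choose $a_i^{(j+1)}\in\bigcap_{r\le\ell_{j+1},r\ne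 i}\bigl(N_r\setminus\bigcup_{s\le j}A^{(s)}\bigr)$ for $i\le\ell_{j+1}$, and let $A^{(j+1)}$ be the set of these. Let $A=\bigcup_{s\le t}A^{(s)}$ and $G=V\setminus A$. For each $i$ let $t_i=\max\{j: i\le\ell_j\}$. For $g\in G$, $t_g=\max\{t_i: g\in N_i\}$ and $I_g=\{i: g\in N_i,\ t_i=t_g\}$. For $x\in\{1,\dots,\ell\}$, $\Gamma_x=\{g\in G: I_g=\{x\}\}$. *)

theory Defs
  imports Complex_Main
begin

(* Indices of the family are 1..l; N i is the i-th k-set. *)

definition prop_i :: "nat \<Rightarrow> (nat \<Rightarrow> 'a set) \<Rightarrow> bool" where
  "prop_i l N \<longleftrightarrow> (\<Inter>i\<in>{1..l}. N i) = {} \<and>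
     (\<forall>i\<in>{1..l}. (\<Inter>j\<in>{1..l} - {i}. N j) \<noteq> {})"

definition prop_ii :: "nat \<Rightarrow> nat \<Rightarrow> (nat \<Rightarrow> 'a set) \<Rightarrow> bool" where
  "prop_ii k l N \<longleftrightarrow> (\<forall>S \<subseteq> (\<Union>i\<in>{1..l}. N i). card S \<ge> k + 1 \<longrightarrow>
     (\<exists>T \<subseteq> S. card T = 3 \<and> (\<forall>i\<in>{1..l}. \<not> T \<subseteq> N i)))"

definition minimal_empty :: "(nat \<Rightarrow> 'a set) \<Rightarrow> nat set \<Rightarrow> bool" where
  "minimal_empty F J \<longleftrightarrow> J \<noteq> {} \<and> (\<Inter>r\<in>J. F r) = {} \<and>
     (\<forall>J'. J' \<subset> J \<longrightarrow> (\<Inter>r\<in>J'. F r) \<noteq> {})"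

(* union of kernels A^(0), ..., A^(j);  a s i = a_i^(s), S s = surviving indices at stage s *)
definition kernels_upto :: "(nat \<Rightarrow> nat \<Rightarrow> 'a) \<Rightarrow> (nat \<Rightarrow> nat set) \<Rightarrow> nat \<Rightarrow> 'a set" where
  "kernels_upto a S j = (\<Union>s\<in>{..j}. a s ` S s)"

definition decomposition_run ::
  "nat \<Rightarrow> (nat \<Rightarrow> 'a set) \<Rightarrow> nat \<Rightarrow> (nat \<Rightarrow> nat set) \<Rightarrow> (nat \<Rightarrow> nat \<Rightarrow> 'a) \<Rightarrow> bool" where
  "decomposition_run l N t S a \<longleftrightarrow>
     S 0 = {1..l} \<and>
     (\<forall>i\<in>S 0. a 0 i \<in> (\<Inter>r\<in>S 0 - {i}. N r)) \<and>
     (\<forall>j<t. S (Suc j) \<subseteq> S j \<and> card (S (Suc j)) \<ge> 4 \<and>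
        minimal_empty (\<lambda>r. N r - kernels_upto a S j) (S (Suc j)) \<and>
        (\<forall>i\<in>S (Suc j). a (Suc j) i \<in> (\<Inter>r\<in>S (Suc j) - {i}. N r - kernels_upto a S j))) \<and>
     (\<forall>J \<subseteq> S t. minimal_empty (\<lambda>r. N r - kernels_upto a S t) J \<longrightarrow> card J = 2 \<or> card J = 3)"

definition stage_idx :: "(nat \<Rightarrow> nat set) \<Rightarrow> nat \<Rightarrow> nat \<Rightarrow> nat" where
  "stage_idx S t i = Max {j. j \<le> t \<and> i \<in> S j}"

definition stage_elem :: "nat \<Rightarrow> (nat \<Rightarrow> 'a set) \<Rightarrow> (nat \<Rightarrow> nat set) \<Rightarrow> nat \<Rightarrow> 'a \<Rightarrow> nat" where
  "stage_elem l N S t g = Max {stage_idx S t i | i. i \<in> {1..l} \<and> g \<in> N i}"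

definition I_set :: "nat \<Rightarrow> (nat \<Rightarrow> 'a set) \<Rightarrow> (nat \<Rightarrow> nat set) \<Rightarrow> nat \<Rightarrow> 'a \<Rightarrow> nat set" where
  "I_set l N S t g = {i \<in> {1..l}. g \<in> N i \<and> stage_idx S t i = stage_elem l N S t g}"

definition G_set :: "nat \<Rightarrow> (nat \<Rightarrow> 'a set) \<Rightarrow> nat \<Rightarrow> (nat \<Rightarrow> nat set) \<Rightarrow> (nat \<Rightarrow> nat \<Rightarrow> 'a) \<Rightarrow> 'a set" where
  "G_set l N t S a = (\<Union>i\<in>{1..l}. N i) - kernels_upto a S t"

definition Gamma :: "nat \<Rightarrow> (nat \<Rightarrow> 'a set) \<Rightarrow> nat \<Rightarrow> (nat \<Rightarrow> nat set) \<Rightarrow> (nat \<Rightarrow> nat \<Rightarrow> 'a) \<Rightarrow> nat \<Rightarrow> 'a set" where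
  "Gamma l N t S a x = {g \<in> G_set l N t S a. I_set l N S t g = {x}}"

end

theory Submission
  imports Defs
begin

lemma run_sub:
  assumes "decomposition_run l N t S a"
  shows "j \<le> t \<Longrightarrow> S j \<subseteq> {1..l}"
proof (induction j)
  case 0 then show ?case using assms unfolding decomposition_run_def by simp
next
  case (Suc j)
  then have "S (Suc j) \<subseteq> S j" using assms unfolding decomposition_run_def by auto
  then show ?case using Suc by auto
qed

lemma stage_idx_le:
  assumes "decomposition_run l N t S a" "i \<in> {1..l}"
  shows "stage_idx S t i \<le> t"
proof -
  have f: "finite {j. j \<le> t \<and> i \<in> S j}" by (rule finite_subset[of _ "{..t}"]) auto
  have "0 \<in> {j. j \<le> t \<and> i \<in> S j}" using assms unfolding decomposition_run_def by auto
  then have "stage_idx S t i \<in> {j. j \<le> t \<and> i \<in> S j}"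
    unfolding stage_idx_def using f Max_in by blast
  then show ?thesis by simp
qed

lemma stage_idx_top:
  assumes "i \<in> S t"
  shows "stage_idx S t i = t"
  unfolding stage_idx_def using assms by (intro Max_eqI) auto

theorem lemma15:
  fixes k l t :: nat and N :: "nat \<Rightarrow> 'a set" and S :: "nat \<Rightarrow> nat set"
    and a :: "nat \<Rightarrow> nat \<Rightarrow> 'a"
  assumes "k \<ge> 3" and "l \<ge> 4"
    and "\<forall>i\<in>{1..l}. finite (N i) \<and> card (N i) = k"
    and "prop_i l N" and "prop_ii k l N"
    and "decomposition_run l N t S a"
  shows "card {x \<in> {1..l}. 0 < card (Gamma l N t S a x) \<and>
            real (card (Gamma l N t S a x)) < real (card (\<Union>i\<in>{1..l}. N i) - k) powr (1/3)}
         \<le> 3 * (card (\<Union>i\<in>{1..l}. N i) - k)"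
proof -
  define V where "V = (\<Union>i\<in>{1..l}. N i)"
  define m where "m = card V - k"
  have finV: "finite V" unfolding V_def using assms(3) by auto
  have run: "decomposition_run l N t S a" by fact
  obtain i where iS: "i \<in> S t"
  proof (cases t)
    case 0
    then have "1 \<in> S t" using run assms(2) unfolding decomposition_run_def by auto
    then show ?thesis using that by blast
  next
    case (Suc j)
    then have "card (S t) \<ge> 4" using run unfolding decomposition_run_def by auto
    then have "S t \<noteq> {}" by auto
    then show ?thesis using that by blast
  qed
  have il: "i \<in> {1..l}" using run_sub[OF run, of t] iS by auto
  have sti: "stage_idx S t i = t" using stage_idx_top[of i S t] iS by simp
  have key: "g \<notin> N i" if x: "x \<in> {1..l}" and g: "g \<in> Gamma l N t S a x" and xi: "x \<noteq> i" for x g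
  proof
    assume gi: "g \<in> N i"
    define M where "M = {stage_idx S t i' | i'. i' \<in> {1..l} \<and> g \<in> N i'}"
    have M_eq: "M = (\<lambda>i'. stage_idx S t i') ` {i' \<in> {1..l}. g \<in> N i'}" unfolding M_def by auto
    have finM: "finite M" unfolding M_eq by auto
    have tM: "t \<in> M" unfolding M_def using il gi sti by force
    have le: "\<forall>y\<in>M. y \<le> t" unfolding M_def using stage_idx_le[OF run] by auto
    have "Max M = t" using finM tM le by (intro Max_eqI) auto
    then have "stage_elem l N S t g = t" unfolding stage_elem_def M_def by simp
    then have "i \<in> I_set l N S t g" unfolding I_set_def using il gi sti by simp
    moreover have "I_set l N S t g = {x}" using g unfolding Gamma_def by simp
    ultimately show False using xi by simp
  qed
  have GV: "Gamma l N t S a x \<subseteq> V" for x unfolding Gamma_def G_set_def V_def by auto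
  define L where "L = {x \<in> {1..l}. Gamma l N t S a x \<noteq> {}}"
  define f where "f x = (SOME g. g \<in> Gamma l N t S a x)" for x
  have fG: "f x \<in> Gamma l N t S a x" if "x \<in> L" for x
    using that unfolding L_def f_def by (auto intro: someI_ex)
  have inj: "inj_on f L"
  proof (rule inj_onI)
    fix x y assume "x \<in> L" "y \<in> L" "f x = f y"
    then have "I_set l N S t (f x) = {x}" "I_set l N S t (f x) = {y}"
      using fG[of x] fG[of y] unfolding Gamma_def by auto
    then show "x = y" by simp
  qed
  have img: "f ` (L - {i}) \<subseteq> V - N i"
  proof
    fix g assume "g \<in> f ` (L - {i})"
    then obtain x where x: "x \<in> L" "x \<noteq> i" "g = f x" by auto
    then have "g \<in> Gamma l N t S a x" using fG by simp
    then show "g \<in> V - N i" using key[of x g] x GV unfolding L_def by auto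
  qed
  have "card (L - {i}) \<le> card (V - N i)"
    using card_inj_on_le[OF inj_on_subset[OF inj] img] finV by auto
  also have "card (V - N i) = m"
  proof -
    have "N i \<subseteq> V" unfolding V_def using il by auto
    then show ?thesis unfolding m_def using card_Diff_subset[of "N i" V] assms(3) il by auto
  qed
  finally have c1: "card (L - {i}) \<le> m" .
  have finL: "finite L" unfolding L_def by auto
  have "card L \<le> card (L - {i}) + 1"
    using finL by (cases "i \<in> L") (auto simp: card_Diff_singleton_if)
  then have cL: "card L \<le> m + 1" using c1 by linarith
  let ?Lt = "{x \<in> {1..l}. 0 < card (Gamma l N t S a x) \<and>
            real (card (Gamma l N t S a x)) < real (card (\<Union>i\<in>{1..l}. N i) - k) powr (1/3)}"
  show ?thesis
  proof (cases "m = 0")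
    case True
    then have "real (card (\<Union>i\<in>{1..l}. N i) - k) powr (1/3) = 0"
      unfolding m_def V_def by simp
    then have "?Lt = {}" by auto
    then have "card ?Lt = 0" by (metis card.empty)
    then show ?thesis by linarith
  next
    case False
    have "?Lt \<subseteq> L" unfolding L_def by auto
    then have "card ?Lt \<le> card L" by (intro card_mono) (auto simp: L_def)
    then show ?thesis using cL False unfolding m_def V_def by linarith
  qed
qed

end
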